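(* Let $c$ be a cost function on $(\mathbb{R}^n)^N$, $\alpha_1,\dots,\alpha_N>0$, and $m_1,\dots,m_N$ measures on $\mathbb{R}^n$. Let $(V_1,\dots,V_N)$ be an admissible tuple with $0<\int e^{-\alpha_iV_i}dm_i<\infty$ for all $i$, and let $\nu_i=e^{-\alpha_iV_i}m_i/\int e^{-\alpha_iV_i}dm_i$. Assume that the Kantorovich duality holds for $(c;\nu_1,\dots,\nu_N)$, with optimal plan $\gamma$ and dual minimizer $(\Phi_1,\dots,\Phi_N)$. Then $$\prod_{i=1}^N\Bigl(\int e^{-\alpha_iV_i}dm_i\Bigr)^{1/\alpha_i}\le\prod_{i=1}^N\Bigl(\int e^{-\alpha_i\Phi_i}dm_i\Bigr)^{1/\alpha_i}.$$
   Context: Points of $(\mathbb{R}^n)^N$ are written $x=(x_1,\dots,x_N)$, $x_i\in\mathbb{R}^n$. A tuple $(V_1,\dots,V_N)$ of functions $V_i:\mathbb{R}^n\to(-\infty,+\infty]$ is admissible (for the cost $c$) if $\sum_{i=1}^N V_i(x_i)\ge c(x)$ for all $x$. Kantorovich duality: for probability measures $\mu_1,\dots,\mu_N$ on $\mathbb{R}^n$, the primal problem is to maximize $\int c\,d\pi$ over probability measures $\pi$ on $(\mathbb{R}^n)^N$ with $i$-th marginal $\mu_i$ for all $i$; the dual problem is to minimize $\sum_i\int f_i\,d\mu_i$ over admissible tuples $(f_i)$ with $f_i\in L^1(\mu_i)$. We say the Kantorovich duality holds for $(c;\mu_1,\dots,\mu_N)$ if the primal problem has a maximizer, the dual problem has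 a minimizer, and the two optimal values are equal and finite. *)

theory Defs
  imports "HOL-Probability.Probability"
begin

text \<open>Points of (R^n)^N are functions x :: nat => 'a (with 'a a Euclidean space
  playing the role of R^n), only the coordinates x i for i < N being relevant.
  Potentials take values in (-inf, +inf], rendered as ereal-valued functions never
  equal to -inf.\<close>

definition admissible :: "nat \<Rightarrow> ((nat \<Rightarrow> 'b) \<Rightarrow> real) \<Rightarrow> (nat \<Rightarrow> 'b \<Rightarrow> ereal) \<Rightarrow> bool"
  where "admissible N c V \<longleftrightarrow>
     (\<forall>i<N. \<forall>x. V i x \<noteq> -\<infinity>) \<and> (\<forall>x. (\<Sum>i<N. V i (x i)) \<ge> ereal (c x))"

definition expneg :: "real \<Rightarrow> ereal \<Rightarrow> real"
  where "expneg a v = (if v = \<infinity> then 0 else exp (- a * real_of_ereal v))"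

definition eL1 :: "'a measure \<Rightarrow> ('a \<Rightarrow> ereal) \<Rightarrow> bool"
  where "eL1 M f \<longleftrightarrow> f \<in> borel_measurable M \<and> (AE x in M. \<bar>f x\<bar> \<noteq> \<infinity>)
                      \<and> integrable M (\<lambda>x. real_of_ereal (f x))"

definition eint :: "'a measure \<Rightarrow> ('a \<Rightarrow> ereal) \<Rightarrow> real"
  where "eint M f = (\<integral>x. real_of_ereal (f x) \<partial>M)"

definition plan :: "nat \<Rightarrow> (nat \<Rightarrow> 'a::euclidean_space measure) \<Rightarrow> (nat \<Rightarrow> 'a) measure \<Rightarrow> bool"
  where "plan N \<mu> \<pi> \<longleftrightarrow> prob_space \<pi> \<and> sets \<pi> = sets (PiM {..<N} (\<lambda>_. borel))
             \<and> (\<forall>i<N. distr \<pi> borel (\<lambda>x. x i) = \<mu> i)"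

text \<open>Kantorovich duality holds for (c; mu_1..mu_N), with optimal plan gam and dual
  minimizer Phi: gam maximizes the primal (plans for which c is not integrable have
  primal value -inf, since c is bounded above by an integrable admissible sum),
  Phi minimizes the dual among admissible L^1 tuples, and the values agree (finite,
  being reals).\<close>
definition kantorovich_duality ::
  "nat \<Rightarrow> ((nat \<Rightarrow> 'a::euclidean_space) \<Rightarrow> real) \<Rightarrow> (nat \<Rightarrow> 'a measure)
    \<Rightarrow> (nat \<Rightarrow> 'a) measure \<Rightarrow> (nat \<Rightarrow> 'a \<Rightarrow> ereal) \<Rightarrow> bool"
  where "kantorovich_duality N c \<mu> gam Phi \<longleftrightarrow>
     plan N \<mu> gam \<and> integrable gam c \<and>
     (\<forall>\<pi>. plan N \<mu> \<pi> \<and> integrable \<pi> c \<longrightarrow> (\<integral>x. c x \<partial>\<pi>) \<le> (\<integral>x. c x \<partial>gam)) \<and>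
     admissible N c Phi \<and> (\<forall>i<N. eL1 (\<mu> i) (Phi i)) \<and>
     (\<forall>f. admissible N c f \<and> (\<forall>i<N. eL1 (\<mu> i) (f i)) \<longrightarrow>
          (\<Sum>i<N. eint (\<mu> i) (Phi i)) \<le> (\<Sum>i<N. eint (\<mu> i) (f i))) \<and>
     (\<integral>x. c x \<partial>gam) = (\<Sum>i<N. eint (\<mu> i) (Phi i))"

definition ennpow :: "ennreal \<Rightarrow> real \<Rightarrow> ennreal"
  where "ennpow x p = (if x = \<top> then \<top> else ennreal (enn2real x powr p))"

end

theory Submission
  imports Defs
begin

lemma expneg_meas[measurable]:
  assumes [measurable]: "f \<in> borel_measurable M"
  shows "(\<lambda>x. expneg a (f x)) \<in> borel_measurable M"
  unfolding expneg_def by measurable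

lemma expneg_pos: "\<bar>v\<bar> \<noteq> \<infinity> \<Longrightarrow> expneg a v > 0"
  by (cases v) (auto simp: expneg_def)

lemma expneg_nonneg: "expneg a v \<ge> 0"
  by (simp add: expneg_def)

lemma ennpow_nz: "x \<noteq> 0 \<Longrightarrow> ennpow x p \<noteq> 0"
  unfolding ennpow_def by (auto simp: enn2real_eq_0_iff)

lemma ennreal_cancel_aux:
  fixes Z A B :: ennreal
  assumes "0 < Z" "Z < \<top>"
  shows "Z * (A / Z * B) = A * B"
proof -
  have "Z * (A / Z * B) = (A * Z / Z) * B" by (simp add: ennreal_times_divide mult_ac)
  also have "A * Z / Z = A" using assms by (intro ennreal_mult_divide_eq) auto
  finally show ?thesis .
qed

lemma exp_jensen_pt: "exp (t::real) \<ge> exp s * (1 + (t - s))"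
proof -
  have "exp s * (1 + (t - s)) \<le> exp s * exp (t - s)"
    using exp_ge_add_one_self[of "t - s"] by (intro mult_left_mono) auto
  also have "\<dots> = exp t" by (simp add: exp_diff)
  finally show ?thesis .
qed

lemma max_exp_bound:
  assumes "(a::real) > 0" shows "max 0 t \<le> exp (a * t) / a"
proof (cases "t \<le> 0")
  case True then show ?thesis using assms by auto
next
  case False
  have "a * t \<le> exp (a * t)" using exp_ge_add_one_self[of "a * t"] by linarith
  then show ?thesis using False assms by (simp add: field_simps)
qed

lemma neg_part_bound:
  fixes f :: "nat \<Rightarrow> real"
  assumes "finite S" "i \<in> S" "0 \<le> (\<Sum>j\<in>S. f j)"
  shows "max 0 (- f i) \<le> (\<Sum>j\<in>S. max 0 (f j))"
proof -
  have "(\<Sum>j\<in>S. f j) = (\<Sum>j\<in>S. max 0 (f j)) - (\<Sum>j\<in>S. max 0 (- f j))"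
    by (simp add: sum_subtractf[symmetric]) (intro sum.cong, auto)
  moreover have "max 0 (- f i) \<le> (\<Sum>j\<in>S. max 0 (- f j))"
    using assms by (intro member_le_sum) auto
  ultimately show ?thesis using assms by linarith
qed

theorem theorem2p1:
  fixes N :: nat
    and c :: "(nat \<Rightarrow> 'a::euclidean_space) \<Rightarrow> real"
    and \<alpha> :: "nat \<Rightarrow> real"
    and m :: "nat \<Rightarrow> 'a measure"
    and V Phi :: "nat \<Rightarrow> 'a \<Rightarrow> ereal"
    and \<nu> :: "nat \<Rightarrow> 'a measure"
    and gam :: "(nat \<Rightarrow> 'a) measure"
  assumes alpha_pos: "\<forall>i<N. \<alpha> i > 0"
    and m_sets: "\<forall>i<N. sets (m i) = sets borel"
    and V_meas: "\<forall>i<N. V i \<in> borel_measurable borel"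
    and V_adm: "admissible N c V"
    and Z_pos: "\<forall>i<N. 0 < (\<integral>\<^sup>+ x. ennreal (expneg (\<alpha> i) (V i x)) \<partial>m i)"
    and Z_fin: "\<forall>i<N. (\<integral>\<^sup>+ x. ennreal (expneg (\<alpha> i) (V i x)) \<partial>m i) < \<infinity>"
    and nu_def: "\<forall>i<N. \<nu> i = density (m i)
                   (\<lambda>x. ennreal (expneg (\<alpha> i) (V i x))
                         / (\<integral>\<^sup>+ y. ennreal (expneg (\<alpha> i) (V i y)) \<partial>m i))"
    and duality: "kantorovich_duality N c \<nu> gam Phi"
  shows "(\<Prod>i<N. ennpow (\<integral>\<^sup>+ x. ennreal (expneg (\<alpha> i) (V i x)) \<partial>m i) (1 / \<alpha> i))
         \<le> (\<Prod>i<N. ennpow (\<integral>\<^sup>+ x. ennreal (expneg (\<alpha> i) (Phi i x)) \<partial>m i) (1 / \<alpha> i))"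
proof -
  define Z where "Z i = (\<integral>\<^sup>+ x. ennreal (expneg (\<alpha> i) (V i x)) \<partial>m i)" for i
  define P where "P i = (\<integral>\<^sup>+ x. ennreal (expneg (\<alpha> i) (Phi i x)) \<partial>m i)" for i
  have plan: "plan N \<nu> gam" and cint: "integrable gam c"
    and Phi_adm: "admissible N c Phi" and Phi_L1: "\<forall>i<N. eL1 (\<nu> i) (Phi i)"
    and dual_eq: "(\<integral>x. c x \<partial>gam) = (\<Sum>i<N. eint (\<nu> i) (Phi i))"
    using duality unfolding kantorovich_duality_def by auto
  have gprob: "prob_space gam" and gsets: "sets gam = sets (PiM {..<N} (\<lambda>_. borel))"
    and gdistr: "\<And>i. i < N \<Longrightarrow> distr gam borel (\<lambda>x. x i) = \<nu> i"
    using plan unfolding plan_def by auto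
  have proj[measurable]: "(\<lambda>x. x i) \<in> measurable gam borel" if "i < N" for i
  proof -
    have "(\<lambda>x. x i) \<in> measurable (PiM {..<N} (\<lambda>_. borel)) (borel::'a measure)"
      using that by (intro measurable_component_singleton) auto
    then show ?thesis by (subst measurable_cong_sets[OF gsets refl])
  qed
  have msets: "sets (m i) = sets borel" if "i < N" for i using m_sets that by auto
  have nusets: "sets (\<nu> i) = sets borel" if "i < N" for i
    using nu_def m_sets that by auto
  have nuprob: "prob_space (\<nu> i)" if "i < N" for i
    using prob_space.prob_space_distr[OF gprob proj[OF that]] gdistr[OF that] by simp
  have Vm: "V i \<in> borel_measurable (m i)" if "i < N" for i
    using V_meas that measurable_cong_sets[OF msets[OF that] refl] by auto
  have Vnu: "V i \<in> borel_measurable (\<nu> i)" if "i < N" for i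
    using V_meas that measurable_cong_sets[OF nusets[OF that] refl] by auto
  have Phib: "Phi i \<in> borel_measurable borel" if "i < N" for i
    using Phi_L1 that measurable_cong_sets[OF nusets[OF that] refl] unfolding eL1_def by auto
  have Phim: "Phi i \<in> borel_measurable (m i)" if "i < N" for i
    using Phib[OF that] measurable_cong_sets[OF msets[OF that] refl] by auto
  have Phinu: "Phi i \<in> borel_measurable (\<nu> i)" if "i < N" for i
    using Phi_L1 that unfolding eL1_def by auto
  have Phifin: "AE x in \<nu> i. \<bar>Phi i x\<bar> \<noteq> \<infinity>" if "i < N" for i
    using Phi_L1 that unfolding eL1_def by auto
  define D where "D i x = ennreal (expneg (\<alpha> i) (V i x)) / Z i" for i x
  have nueq: "\<nu> i = density (m i) (D i)" if "i < N" for i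
    using nu_def that unfolding D_def Z_def by auto
  have dm[measurable]: "D i \<in> borel_measurable (m i)" if "i < N" for i
    unfolding D_def using Vm[OF that] by measurable
  have AEnu: "AE x in \<nu> i. Q x" if "i < N" "AE x in m i. 0 < D i x \<longrightarrow> Q x" for i Q
    using that(2) unfolding nueq[OF that(1)] AE_density[OF dm[OF that(1)]] .
  have Vfin: "AE x in \<nu> i. V i x \<noteq> \<infinity>" if "i < N" for i
    by (rule AEnu[OF that]) (auto simp: expneg_def D_def)
  have Ppos: "P i \<noteq> 0" if "i < N" for i
  proof
    assume "P i = 0"
    then have H: "AE x in m i. ennreal (expneg (\<alpha> i) (Phi i x)) = 0"
      unfolding P_def by (subst (asm) nn_integral_0_iff_AE) (use Phim[OF that] in measurable)
    have "AE x in \<nu> i. ennreal (expneg (\<alpha> i) (Phi i x)) = 0"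
      by (rule AEnu[OF that]) (use H in eventually_elim, simp)
    then have "AE x in \<nu> i. False" using Phifin[OF that]
      by eventually_elim (metis expneg_pos ennreal_eq_0_iff not_le)
    then show False using prob_space.AE_False[OF nuprob[OF that]] by simp
  qed
  define ph where "ph i x = real_of_ereal (Phi i x)" for i x
  define v where "v i x = real_of_ereal (V i x)" for i x
  define u where "u i x = v i x - ph i x" for i x
  have phb[measurable]: "ph i \<in> borel_measurable borel" if "i < N" for i
    unfolding ph_def using Phib[OF that] by measurable
  have vb[measurable]: "v i \<in> borel_measurable borel" if "i < N" for i
    unfolding v_def using V_meas that by (intro borel_measurable_real_of_ereal) auto
  have ub[measurable]: "u i \<in> borel_measurable borel" if "i < N" for i
    unfolding u_def using that by measurable
  have phint: "integrable (\<nu> i) (ph i)" if "i < N" for i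
    using Phi_L1 that unfolding eL1_def ph_def by auto
  have phintg: "integrable gam (\<lambda>x. ph i (x i))" if "i < N" for i
    using phint[OF that] integrable_distr_eq[OF proj[OF that] phb[OF that]] gdistr[OF that] by simp
  have phinteq: "(\<integral>x. ph i (x i) \<partial>gam) = eint (\<nu> i) (Phi i)" if "i < N" for i
    using integral_distr[OF proj[OF that] phb[OF that]] gdistr[OF that] unfolding eint_def ph_def by simp
  have AEg: "AE x in gam. Q (x i)" if "i < N" "AE y in \<nu> i. Q y" "Measurable.pred borel Q" for i Q
  proof -
    have "AE y in distr gam borel (\<lambda>x. x i). Q y" using that(2) unfolding gdistr[OF that(1)] .
    then show ?thesis by (subst (asm) AE_distr_iff) (use that proj in auto)
  qed
  have finall: "AE x in gam. \<forall>i\<in>{..<N}. \<bar>Phi i (x i)\<bar> \<noteq> \<infinity> \<and> V i (x i) \<noteq> \<infinity>"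
  proof (rule AE_finite_allI, simp)
    fix i assume i: "i \<in> {..<N}"
    have A: "AE y in \<nu> i. \<bar>Phi i y\<bar> \<noteq> \<infinity> \<and> V i y \<noteq> \<infinity>"
      using Phifin[of i] Vfin[of i] i by auto
    show "AE x in gam. \<bar>Phi i (x i)\<bar> \<noteq> \<infinity> \<and> V i (x i) \<noteq> \<infinity>"
      by (rule AEg[OF _ A]) (use i Phib[of i] V_meas in \<open>auto intro!: pred_intros_logic\<close>)
  qed
  define h where "h x = (\<Sum>i<N. ph i (x i)) - c x" for x
  have hint: "integrable gam h" unfolding h_def using phintg cint by (intro Bochner_Integration.integrable_diff integrable_sum) auto
  have hnn: "AE x in gam. 0 \<le> h x"
    using finall
  proof eventually_elim
    case (elim x)
    have "ereal (c x) \<le> (\<Sum>i<N. Phi i (x i))" using Phi_adm unfolding admissible_def by auto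
    also have "\<dots> = (\<Sum>i<N. ereal (ph i (x i)))"
      using elim by (intro sum.cong) (auto simp: ph_def ereal_real)
    finally show ?case unfolding h_def by simp
  qed
  have hzero: "(\<integral>x. h x \<partial>gam) = 0"
  proof -
    have "(\<integral>x. h x \<partial>gam) = (\<integral>x. (\<Sum>i<N. ph i (x i)) \<partial>gam) - (\<integral>x. c x \<partial>gam)"
      unfolding h_def using phintg cint by (intro Bochner_Integration.integral_diff integrable_sum) auto
    also have "(\<integral>x. (\<Sum>i<N. ph i (x i)) \<partial>gam) = (\<Sum>i<N. (\<integral>x. ph i (x i) \<partial>gam))"
      using phintg by (intro Bochner_Integration.integral_sum) auto
    also have "\<dots> = (\<Sum>i<N. eint (\<nu> i) (Phi i))" using phinteq by simp
    finally show ?thesis using dual_eq by simp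
  qed
  have h0: "AE x in gam. h x = 0"
    using integral_nonneg_eq_0_iff_AE[OF hint hnn] hzero by simp
  have usum: "AE x in gam. 0 \<le> (\<Sum>i<N. u i (x i))"
    using finall h0
  proof eventually_elim
    case (elim x)
    have "ereal (c x) \<le> (\<Sum>i<N. V i (x i))" using V_adm unfolding admissible_def by auto
    also have "\<dots> = (\<Sum>i<N. ereal (v i (x i)))"
      using elim V_adm unfolding admissible_def by (intro sum.cong) (auto simp: v_def ereal_real)
    finally have "c x \<le> (\<Sum>i<N. v i (x i))" by simp
    then show ?case using elim unfolding h_def u_def by (simp add: sum_subtractf)
  qed
  show ?thesis
  proof (cases "\<exists>i<N. P i = \<top>")
    case True
    then obtain k where k: "k < N" "P k = \<top>" by auto
    have "(\<Prod>i<N. ennpow (P i) (1 / \<alpha> i)) = \<top>"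
      using k Ppos by (subst ennreal_prod_eq_top) (auto simp: ennpow_nz intro!: bexI[of _ k] simp: ennpow_def enn2real_eq_0_iff)
    then show ?thesis unfolding P_def by simp
  next
    case False
    then have Pfin: "P i < \<top>" if "i < N" for i using that by (auto simp: top.not_eq_extremum)
    have Zpos: "0 < Z i" and Zfin: "Z i < \<top>" if "i < N" for i
      using Z_pos Z_fin that unfolding Z_def by auto
    have ZG: "Z i * (\<integral>\<^sup>+x. ennreal (exp (\<alpha> i * u i x)) \<partial>\<nu> i) \<le> P i" if i: "i < N" for i
    proof -
      define I where "I = {y. \<bar>Phi i y\<bar> \<noteq> \<infinity>}"
      have Ib[measurable]: "I \<in> sets borel" unfolding I_def using Phib[OF i] by measurable
      have m1: "(\<lambda>x. ennreal (exp (\<alpha> i * u i x)) * indicator I x) \<in> borel_measurable (m i)"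
        by (subst measurable_cong_sets[OF msets[OF i] refl]) (use ub[OF i] in measurable)
      have m2: "(\<lambda>x. D i x * (ennreal (exp (\<alpha> i * u i x)) * indicator I x)) \<in> borel_measurable (m i)"
        using m1 dm[OF i] by measurable
      have "(\<integral>\<^sup>+x. ennreal (exp (\<alpha> i * u i x)) \<partial>\<nu> i)
          = (\<integral>\<^sup>+x. ennreal (exp (\<alpha> i * u i x)) * indicator I x \<partial>\<nu> i)"
        by (rule nn_integral_cong_AE) (use Phifin[OF i] in \<open>eventually_elim, simp add: I_def\<close>)
      also have "\<dots> = (\<integral>\<^sup>+x. D i x * (ennreal (exp (\<alpha> i * u i x)) * indicator I x) \<partial>m i)"
        unfolding nueq[OF i] by (rule nn_integral_density[OF dm[OF i] m1])
      finally have "Z i * (\<integral>\<^sup>+x. ennreal (exp (\<alpha> i * u i x)) \<partial>\<nu> i)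
          = (\<integral>\<^sup>+x. Z i * (D i x * (ennreal (exp (\<alpha> i * u i x)) * indicator I x)) \<partial>m i)"
        by (simp add: nn_integral_cmult[OF m2])
      also have "\<dots> \<le> P i" unfolding P_def
      proof (rule nn_integral_mono)
        fix x
        have "Z i * (D i x * (ennreal (exp (\<alpha> i * u i x)) * indicator I x))
            = ennreal (expneg (\<alpha> i) (V i x)) * (ennreal (exp (\<alpha> i * u i x)) * indicator I x)"
          unfolding D_def by (rule ennreal_cancel_aux[OF Zpos[OF i] Zfin[OF i]])
        also have "\<dots> \<le> ennreal (expneg (\<alpha> i) (Phi i x))"
        proof (cases "V i x = \<infinity> \<or> x \<notin> I")
          case True then show ?thesis by (auto simp: expneg_def)
        next
          case False
          then have fin: "\<bar>V i x\<bar> \<noteq> \<infinity>" "\<bar>Phi i x\<bar> \<noteq> \<infinity>"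
            using V_adm i unfolding admissible_def I_def by auto
          then have "expneg (\<alpha> i) (V i x) * exp (\<alpha> i * u i x) = expneg (\<alpha> i) (Phi i x)"
            by (auto simp: expneg_def u_def v_def ph_def algebra_simps simp flip: exp_add)
          then show ?thesis using False
            by (simp add: ennreal_mult''[symmetric] expneg_nonneg)
        qed
        finally show "Z i * (D i x * (ennreal (exp (\<alpha> i * u i x)) * indicator I x))
            \<le> ennreal (expneg (\<alpha> i) (Phi i x))" .
      qed
      finally show ?thesis .
    qed
    have Gfin: "(\<integral>\<^sup>+x. ennreal (exp (\<alpha> i * u i x)) \<partial>\<nu> i) < \<top>" if i: "i < N" for i
    proof (rule ccontr)
      assume "\<not> (\<integral>\<^sup>+x. ennreal (exp (\<alpha> i * u i x)) \<partial>\<nu> i) < \<top>"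
      then have "(\<integral>\<^sup>+x. ennreal (exp (\<alpha> i * u i x)) \<partial>\<nu> i) = \<top>" using less_top by blast
      then have "Z i * (\<integral>\<^sup>+x. ennreal (exp (\<alpha> i * u i x)) \<partial>\<nu> i) = \<top>"
        using Zpos[OF i] by (simp add: ennreal_mult_eq_top_iff)
      then show False using ZG[OF i] Pfin[OF i] by (simp add: top_unique)
    qed
    have unu[measurable]: "u i \<in> borel_measurable (\<nu> i)" if i: "i < N" for i
      by (subst measurable_cong_sets[OF nusets[OF i] refl]) (rule ub[OF i])
    have expint: "integrable (\<nu> i) (\<lambda>x. exp (\<alpha> i * u i x))" if i: "i < N" for i
      unfolding integrable_iff_bounded using Gfin[OF i] unu[OF i] by auto
    have posint: "integrable (\<nu> i) (\<lambda>x. max 0 (u i x))" if i: "i < N" for i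
    proof (rule Bochner_Integration.integrable_bound[OF integrable_divide[OF expint[OF i], of "\<alpha> i"]])
      show "(\<lambda>x. max 0 (u i x)) \<in> borel_measurable (\<nu> i)" using unu[OF i] by measurable
      show "AE x in \<nu> i. norm (max 0 (u i x)) \<le> norm (exp (\<alpha> i * u i x) / \<alpha> i)"
        using max_exp_bound[of "\<alpha> i" "u i _"] alpha_pos i by auto
    qed
    have posb[measurable]: "(\<lambda>x. max 0 (u i x)) \<in> borel_measurable borel" if i: "i < N" for i
      using ub[OF i] by measurable
    have negb[measurable]: "(\<lambda>x. max 0 (- u i x)) \<in> borel_measurable borel" if i: "i < N" for i
      using ub[OF i] by measurable
    have posintg: "integrable gam (\<lambda>x. max 0 (u i (x i)))" if i: "i < N" for i
      using posint[OF i] integrable_distr_eq[OF proj[OF i] posb[OF i]] gdistr[OF i] by simp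
    have negintg: "integrable gam (\<lambda>x. max 0 (- u i (x i)))" if i: "i < N" for i
    proof (rule Bochner_Integration.integrable_bound[OF Bochner_Integration.integrable_sum[OF posintg]])
      show "(\<lambda>x. max 0 (- u i (x i))) \<in> borel_measurable gam"
        using negb[OF i] proj[OF i] by measurable
      show "AE x in gam. norm (max 0 (- u i (x i))) \<le> norm (\<Sum>j<N. max 0 (u j (x j)))"
        using usum
      proof eventually_elim
        case (elim x)
        have "max 0 (- u i (x i)) \<le> (\<Sum>j<N. max 0 (u j (x j)))"
          using neg_part_bound[of "{..<N}" i "\<lambda>j. u j (x j)"] elim i by auto
        moreover have "0 \<le> (\<Sum>j<N. max 0 (u j (x j)))" by (intro sum_nonneg) auto
        ultimately show ?case by simp
      qed
    qed auto
    have negint: "integrable (\<nu> i) (\<lambda>x. max 0 (- u i x))" if i: "i < N" for i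
      using negintg[OF i] integrable_distr_eq[OF proj[OF i] negb[OF i]] gdistr[OF i] by simp
    have uint: "integrable (\<nu> i) (u i)" if i: "i < N" for i
    proof -
      have "integrable (\<nu> i) (\<lambda>x. max 0 (u i x) - max 0 (- u i x))"
        using posint[OF i] negint[OF i] by auto
      moreover have "(\<lambda>x. max 0 (u i x) - max 0 (- u i x)) = u i" by (auto simp: fun_eq_iff)
      ultimately show ?thesis by simp
    qed
    have uintg: "integrable gam (\<lambda>x. u i (x i))" if i: "i < N" for i
      using uint[OF i] integrable_distr_eq[OF proj[OF i] ub[OF i]] gdistr[OF i] by simp
    define a where "a i = (\<integral>x. u i x \<partial>\<nu> i)" for i
    have aeq: "a i = (\<integral>x. u i (x i) \<partial>gam)" if i: "i < N" for i
      using integral_distr[OF proj[OF i] ub[OF i]] gdistr[OF i] unfolding a_def by simp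
    have asum: "0 \<le> (\<Sum>i<N. a i)"
    proof -
      have "(\<Sum>i<N. a i) = (\<integral>x. (\<Sum>i<N. u i (x i)) \<partial>gam)"
        using uintg aeq by (subst Bochner_Integration.integral_sum) auto
      also have "\<dots> \<ge> 0" using usum by (intro integral_nonneg_AE)
      finally show ?thesis by simp
    qed
    define g where "g i = (\<integral>x. exp (\<alpha> i * u i x) \<partial>\<nu> i)" for i
    have jensen: "exp (\<alpha> i * a i) \<le> g i" if i: "i < N" for i
    proof -
      interpret prob_space "\<nu> i" using nuprob[OF i] .
      have "(\<integral>x. exp (\<alpha> i * a i) * (1 - \<alpha> i * a i) + (exp (\<alpha> i * a i) * \<alpha> i) * u i x \<partial>\<nu> i)
            \<le> g i"
        unfolding g_def
      proof (rule integral_mono)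
        show "integrable (\<nu> i) (\<lambda>x. exp (\<alpha> i * a i) * (1 - \<alpha> i * a i) + (exp (\<alpha> i * a i) * \<alpha> i) * u i x)"
          using uint[OF i] by auto
        show "integrable (\<nu> i) (\<lambda>x. exp (\<alpha> i * u i x))" by (rule expint[OF i])
        fix x
        show "exp (\<alpha> i * a i) * (1 - \<alpha> i * a i) + (exp (\<alpha> i * a i) * \<alpha> i) * u i x \<le> exp (\<alpha> i * u i x)"
          using exp_jensen_pt[where t="\<alpha> i * u i x" and s="\<alpha> i * a i"] by (simp add: algebra_simps)
      qed
      also have "(\<integral>x. exp (\<alpha> i * a i) * (1 - \<alpha> i * a i) + (exp (\<alpha> i * a i) * \<alpha> i) * u i x \<partial>\<nu> i)
          = exp (\<alpha> i * a i) * (1 - \<alpha> i * a i) + (exp (\<alpha> i * a i) * \<alpha> i) * a i"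
        using uint[OF i] unfolding a_def
        by (subst Bochner_Integration.integral_add) (auto simp: prob_space)
      also have "\<dots> = exp (\<alpha> i * a i)" by (simp add: algebra_simps)
      finally show ?thesis by simp
    qed
    define z where "z i = enn2real (Z i)" for i
    define p where "p i = enn2real (P i)" for i
    have Zeq: "Z i = ennreal (z i)" if i: "i < N" for i
      using Zfin[OF i] unfolding z_def by (simp add: less_top)
    have Peq: "P i = ennreal (p i)" if i: "i < N" for i
      using Pfin[OF i] unfolding p_def by (simp add: less_top)
    have znn: "0 \<le> z i" and pnn: "0 \<le> p i" for i unfolding z_def p_def by auto
    have gnn: "0 \<le> g i" for i unfolding g_def by (intro Bochner_Integration.integral_nonneg) auto
    have zg: "z i * g i \<le> p i" if i: "i < N" for i
    proof -
      have "(\<integral>\<^sup>+x. ennreal (exp (\<alpha> i * u i x)) \<partial>\<nu> i) = ennreal (g i)"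
        unfolding g_def using expint[OF i] by (intro nn_integral_eq_integral) auto
      then have "ennreal (z i * g i) \<le> ennreal (p i)"
        using ZG[OF i] Zeq[OF i] Peq[OF i] znn gnn by (simp add: ennreal_mult)
      then show ?thesis using pnn by (simp add: ennreal_le_iff)
    qed
    have key: "z i powr (1 / \<alpha> i) * exp (a i) \<le> p i powr (1 / \<alpha> i)" if i: "i < N" for i
    proof -
      have ai: "\<alpha> i > 0" using alpha_pos i by auto
      have "z i * exp (\<alpha> i * a i) \<le> p i"
        using zg[OF i] jensen[OF i] znn[of i] by (meson mult_left_mono order_trans)
      then have "(z i * exp (\<alpha> i * a i)) powr (1 / \<alpha> i) \<le> p i powr (1 / \<alpha> i)"
        using znn[of i] ai by (intro powr_mono2) auto
      moreover have "(z i * exp (\<alpha> i * a i)) powr (1 / \<alpha> i) = z i powr (1 / \<alpha> i) * exp (a i)"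
        using znn[of i] ai by (simp add: powr_mult exp_powr_real)
      ultimately show ?thesis by simp
    qed
    have "(\<Prod>i<N. z i powr (1 / \<alpha> i)) \<le> (\<Prod>i<N. z i powr (1 / \<alpha> i)) * exp (\<Sum>i<N. a i)"
    proof -
      have "1 \<le> exp (\<Sum>i<N. a i)" using asum by simp
      moreover have "0 \<le> (\<Prod>i<N. z i powr (1 / \<alpha> i))" by (intro prod_nonneg) auto
      ultimately show ?thesis by (metis mult.right_neutral mult_left_mono)
    qed
    also have "\<dots> = (\<Prod>i<N. z i powr (1 / \<alpha> i) * exp (a i))"
      by (simp add: exp_sum prod.distrib)
    also have "\<dots> \<le> (\<Prod>i<N. p i powr (1 / \<alpha> i))"
      using key by (intro prod_mono) auto
    finally have real_ineq: "(\<Prod>i<N. z i powr (1 / \<alpha> i)) \<le> (\<Prod>i<N. p i powr (1 / \<alpha> i))" .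
    have "(\<Prod>i<N. ennpow (Z i) (1 / \<alpha> i)) = (\<Prod>i<N. ennreal (z i powr (1 / \<alpha> i)))"
      using Zfin unfolding ennpow_def z_def by (intro prod.cong) (auto simp: less_top)
    also have "\<dots> = ennreal (\<Prod>i<N. z i powr (1 / \<alpha> i))" by (rule prod_ennreal) auto
    also have "\<dots> \<le> ennreal (\<Prod>i<N. p i powr (1 / \<alpha> i))" using real_ineq by (rule ennreal_leI)
    also have "\<dots> = (\<Prod>i<N. ennreal (p i powr (1 / \<alpha> i)))" by (rule prod_ennreal[symmetric]) auto
    also have "\<dots> = (\<Prod>i<N. ennpow (P i) (1 / \<alpha> i))"
      using Pfin unfolding ennpow_def p_def by (intro prod.cong) (auto simp: less_top)
    finally show ?thesis unfolding Z_def P_def .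
  qed
qed

end
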